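(* Let $\mathcal{F}$ be a complete polyhedral fan in $\mathbb{R}^d$, i.e. a collection of relatively open pointed polyhedral cones with apex at the origin, covering $\mathbb{R}^d$, such that for any two cones $C,C'$ the closure of $C\cap C'$... more precisely such that the closures of any two cones meet in a common face of both. Let $\mathcal{L}$ be the poset of nonzero cones of $\mathcal{F}$ (ordered by the face relation), and let $\mathcal{L}'\subseteq\mathcal{L}$ be the subposet of cones contained in $U^+\cup U^-$, where $U^+,U^-$ are two nonempty convex (not necessarily closed) sets, each a union of cones of $\mathcal{F}$. Assume there is a linear functional $f$ on $\mathbb{R}^d$ with $f(x)>0$ for all $x\in U^+$ and $f(x)<0$ for all $x\in U^-$. Then $\mathcal{L}-\mathcal{L}'$ is homotopy equivalent to a $(d-2)$-sphere.
   Context: The topology of a poset is that of the geometric realization of its order complex (the simplicial complex of its chains). *)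

theory Defs
  imports "HOL-Analysis.Analysis"
begin

definition pointed_polyhedral_cone :: "'a::euclidean_space set \<Rightarrow> bool" where
  "pointed_polyhedral_cone K \<longleftrightarrow>
     polyhedron K \<and> cone K \<and> K \<noteq> {} \<and> (\<forall>x\<in>K. - x \<in> K \<longrightarrow> x = 0)"

definition complete_fan :: "'a::euclidean_space set set \<Rightarrow> bool" where
  "complete_fan F \<longleftrightarrow>
     finite F \<and>
     (\<forall>C\<in>F. \<exists>K. pointed_polyhedral_cone K \<and> C = rel_interior K) \<and>
     \<Union>F = UNIV \<and>
     (\<forall>C\<in>F. \<forall>C'\<in>F. (closure C \<inter> closure C') face_of closure C \<and>
                      (closure C \<inter> closure C') face_of closure C')"

definition fan_le :: "'a::euclidean_space set \<Rightarrow> 'a set \<Rightarrow> bool" where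
  "fan_le C C' \<longleftrightarrow> closure C face_of closure C'"

text \<open>Geometric realization of the order complex (simplicial complex of chains) of a
  finite poset with carrier P and order le: the points are the convex combinations
  (barycentric coordinates) supported on chains, with the topology inherited from the
  product topology on functions into the reals.\<close>
definition order_complex_realization :: "'b set \<Rightarrow> ('b \<Rightarrow> 'b \<Rightarrow> bool) \<Rightarrow> ('b \<Rightarrow> real) topology" where
  "order_complex_realization P le =
     subtopology (powertop_real UNIV)
       {t. (\<forall>x. 0 \<le> t x) \<and> (\<forall>x. x \<notin> P \<longrightarrow> t x = 0) \<and> sum t P = 1 \<and>
           (\<forall>x y. 0 < t x \<and> 0 < t y \<longrightarrow> le x y \<or> le y x)}"

text \<open>The (d-2)-sphere, realized as the equator of the unit sphere of a d-dimensional
  Euclidean space (empty when d = 1).\<close>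
definition codim2_sphere :: "'a::euclidean_space itself \<Rightarrow> 'a topology" where
  "codim2_sphere _ = top_of_set {x::'a. x \<in> sphere 0 1 \<and> x \<bullet> (SOME b. b \<in> (Basis::'a set)) = 0}"

end

theory Submission
  imports Defs
begin

locale fan =
  fixes F :: "'a::euclidean_space set set"
  assumes cf: "complete_fan F"
begin

lemma finF: "finite F" using cf by (simp add: complete_fan_def)

lemma coverF: "\<exists>D\<in>F. x \<in> D" using cf unfolding complete_fan_def by blast

lemma faceF: "C \<in> F \<Longrightarrow> C' \<in> F \<Longrightarrow> (closure C \<inter> closure C') face_of closure C"
  using cf unfolding complete_fan_def by blast

lemma basicF:
  assumes "C \<in> F"
  shows "convex (closure C)" "cone (closure C)" "closed (closure C)"
    "\<And>x. x \<in> closure C \<Longrightarrow> - x \<in> closure C \<Longrightarrow> x = 0"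
    "C = rel_interior (closure C)" "C \<noteq> {}" "0 \<in> closure C" "C \<subseteq> closure C"
proof -
  obtain K where K: "pointed_polyhedral_cone K" "C = rel_interior K"
    using cf assms unfolding complete_fan_def by blast
  have pK: "polyhedron K" "cone K" "K \<noteq> {}" "\<forall>x\<in>K. - x \<in> K \<longrightarrow> x = 0"
    using K(1) unfolding pointed_polyhedral_cone_def by auto
  have cvK: "convex K" using pK(1) polyhedron_imp_convex by blast
  have clK: "closed K" using pK(1) polyhedron_imp_closed by blast
  have eq: "closure C = K"
    using K(2) convex_closure_rel_interior[OF cvK] clK closure_closed by metis
  show "convex (closure C)" "cone (closure C)" "closed (closure C)"
    using eq cvK pK clK by auto
  show "\<And>x. x \<in> closure C \<Longrightarrow> - x \<in> closure C \<Longrightarrow> x = 0" using eq pK(4) by auto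
  show "C = rel_interior (closure C)" using eq K(2) by simp
  show "C \<noteq> {}" using K(2) cvK pK(3) rel_interior_eq_empty by blast
  show "0 \<in> closure C" using eq pK(2,3) cone_contains_0 by blast
  show "C \<subseteq> closure C" by (rule closure_subset)
qed

lemma ri_scale:
  assumes "C \<in> F" "x \<in> C" "c > 0"
  shows "c *\<^sub>R x \<in> C"
proof -
  let ?K = "closure C"
  have xr: "x \<in> rel_interior ?K" using assms basicF by auto
  then obtain e where e: "e > 0" "cball x e \<inter> affine hull ?K \<subseteq> ?K" "x \<in> ?K"
    using mem_rel_interior_cball by blast
  have aff: "affine hull ?K = span ?K"
    by (rule affine_hull_span_0) (meson assms(1) basicF(7) hull_inc)
  have "cball (c *\<^sub>R x) (c * e) \<inter> affine hull ?K \<subseteq> ?K"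
  proof
    fix y assume y: "y \<in> cball (c *\<^sub>R x) (c * e) \<inter> affine hull ?K"
    have "(1/c) *\<^sub>R y \<in> cball x e"
    proof -
      have ee: "c *\<^sub>R x - y = c *\<^sub>R (x - (1/c) *\<^sub>R y)" using assms(3) by (simp add: algebra_simps)
      have "dist x ((1/c) *\<^sub>R y) = (1/c) * dist (c *\<^sub>R x) y"
        using assms(3) unfolding dist_norm ee by simp
      also have "\<dots> \<le> (1/c) * (c * e)" using y assms(3) by (intro mult_left_mono) auto
      finally show ?thesis using assms(3) by simp
    qed
    moreover have "(1/c) *\<^sub>R y \<in> affine hull ?K" using y aff by (simp add: span_mul)
    ultimately have "(1/c) *\<^sub>R y \<in> ?K" using e by blast
    then have "c *\<^sub>R ((1/c) *\<^sub>R y) \<in> ?K"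
      using basicF(2)[OF assms(1)] assms(3) unfolding cone_def by (meson less_imp_le)
    then show "y \<in> ?K" using assms(3) by simp
  qed
  moreover have "c *\<^sub>R x \<in> ?K" using e(3) basicF(2)[OF assms(1)] assms(3) by (simp add: cone_def)
  ultimately have "c *\<^sub>R x \<in> rel_interior ?K"
    using mem_rel_interior_cball assms(3) e(1) by (metis mult_pos_pos)
  then show ?thesis using basicF(5)[OF assms(1)] by simp
qed

lemma cone_add:
  assumes "convex K" "cone K" "x \<in> K" "y \<in> K"
  shows "x + y \<in> K"
proof -
  have "(1/2) *\<^sub>R x + (1/2) *\<^sub>R y \<in> K" using assms by (intro convexD) auto
  then have "2 *\<^sub>R ((1/2) *\<^sub>R x + (1/2) *\<^sub>R y) \<in> K" using assms(2) by (simp add: cone_def)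
  then show ?thesis by (simp add: scaleR_add_right)
qed

lemma ri_add:
  assumes "C \<in> F" "x \<in> C" "y \<in> closure C"
  shows "x + y \<in> C"
proof -
  have "y - (1/2) *\<^sub>R (y - x) \<in> rel_interior (closure C)"
    using rel_interior_closure_convex_shrink[of "closure C" x y "1/2"] assms basicF[OF assms(1)]
    by auto
  then have m: "y - (1/2) *\<^sub>R (y - x) \<in> C" using basicF(5)[OF assms(1)] by simp
  have "2 *\<^sub>R (y - (1/2) *\<^sub>R (y - x)) \<in> C" by (rule ri_scale[OF assms(1) m]) simp
  moreover have "2 *\<^sub>R (y - (1/2) *\<^sub>R (y - x)) = x + y" by (simp add: algebra_simps scaleR_2)
  ultimately show ?thesis by simp
qed

lemma zero_in:
  assumes "C \<in> F" "0 \<in> C"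
  shows "C = {0}"
proof -
  let ?K = "closure C"
  have "0 \<in> rel_interior ?K" using assms basicF by auto
  then obtain e where e: "e > 0" "cball 0 e \<inter> affine hull ?K \<subseteq> ?K"
    using mem_rel_interior_cball by blast
  have aff: "affine hull ?K = span ?K"
    by (rule affine_hull_span_0) (meson assms(1) basicF(7) hull_inc)
  have "z = 0" if z: "z \<in> ?K" for z
  proof (rule ccontr)
    assume nz: "z \<noteq> 0"
    let ?p = "(- (e / norm z)) *\<^sub>R z"
    have "?p \<in> cball 0 e" using nz e by simp
    moreover have "?p \<in> affine hull ?K" unfolding aff using span_mul[OF span_base[OF z]] by blast
    ultimately have "?p \<in> ?K" using e by blast
    moreover have "- ?p \<in> ?K" using z basicF(2)[OF assms(1)] e nz by (simp add: cone_def)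
    ultimately have "?p = 0" using basicF(4)[OF assms(1)] by blast
    then show False using nz e by simp
  qed
  then have "C \<subseteq> {0}" using basicF(8)[OF assms(1)] by blast
  then show ?thesis using assms(2) by blast
qed

lemma ri_face_eq:
  fixes S T :: "'b::euclidean_space set"
  assumes "T face_of S" "x \<in> T" "x \<in> rel_interior S"
  shows "T = S"
  using face_of_subset_rel_frontier[OF assms(1)] assms(2,3) unfolding rel_frontier_def by blast

lemma disj:
  assumes "C \<in> F" "C' \<in> F" "x \<in> C" "x \<in> C'"
  shows "C = C'"
proof -
  have xc: "x \<in> closure C" "x \<in> closure C'" using assms(3,4) closure_subset by blast+
  have xr: "x \<in> rel_interior (closure C)" "x \<in> rel_interior (closure C')"
    using assms basicF(5) by blast+
  have 1: "closure C \<inter> closure C' = closure C"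
    by (rule ri_face_eq[OF faceF[OF assms(1,2)], of x]) (use xc xr in auto)
  have 2: "closure C' \<inter> closure C = closure C'"
    by (rule ri_face_eq[OF faceF[OF assms(2,1)], of x]) (use xc xr in auto)
  have "closure C = closure C'" using 1 2 by blast
  then show ?thesis using basicF(5) assms(1,2) by metis
qed

lemma below:
  assumes "C \<in> F" "y \<in> closure C"
  obtains D where "D \<in> F" "y \<in> D" "fan_le D C"
proof -
  obtain D where D: "D \<in> F" "y \<in> D" using coverF by blast
  have yc: "y \<in> closure D" using D(2) closure_subset by blast
  have yr: "y \<in> rel_interior (closure D)" using D basicF(5) by blast
  have "closure D \<inter> closure C = closure D"
    by (rule ri_face_eq[OF faceF[OF D(1) assms(1)], of y]) (use assms yc yr in auto)
  then have "closure D face_of closure C" using faceF[OF assms(1) D(1)] by (simp add: Int_commute)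
  then show ?thesis using that D unfolding fan_le_def by blast
qed

lemma le_refl: "C \<in> F \<Longrightarrow> fan_le C C"
  unfolding fan_le_def using basicF(1) face_of_refl by blast

lemma le_trans: "fan_le C D \<Longrightarrow> fan_le D E \<Longrightarrow> fan_le C E"
  unfolding fan_le_def using face_of_trans by blast

lemma le_antisym: "C \<in> F \<Longrightarrow> D \<in> F \<Longrightarrow> fan_le C D \<Longrightarrow> fan_le D C \<Longrightarrow> C = D"
  unfolding fan_le_def using face_of_imp_subset basicF(5) by (metis subset_antisym)

lemma le_sub: "fan_le C D \<Longrightarrow> closure C \<subseteq> closure D"
  unfolding fan_le_def using face_of_imp_subset by blast


definition "L = {C\<in>F. C \<noteq> {0}}"
definition "vv C = (SOME x. x \<in> C)"
definition "chainfun (c::'a set \<Rightarrow> real) \<longleftrightarrow> (\<forall>D. 0 \<le> c D) \<and> (\<forall>D. c D \<noteq> 0 \<longrightarrow> D \<in> L) \<and>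
   (\<forall>D E. 0 < c D \<and> 0 < c E \<longrightarrow> fan_le D E \<or> fan_le E D)"
definition "vs (c::'a set \<Rightarrow> real) = (\<Sum>D\<in>L. c D *\<^sub>R vv D)"
definition "supp (c::'a set \<Rightarrow> real) = {D\<in>L. 0 < c D}"

lemma finL: "finite L" using finF unfolding L_def by simp

lemma vvL: assumes "D \<in> L" shows "vv D \<in> D" "vv D \<noteq> 0"
proof -
  have "D \<in> F" "D \<noteq> {0}" using assms L_def by auto
  then show v: "vv D \<in> D" unfolding vv_def using basicF(6) by (metis some_in_eq)
  show "vv D \<noteq> 0" using v zero_in \<open>D \<in> F\<close> \<open>D \<noteq> {0}\<close> by fastforce
qed

lemma has_max:
  assumes "finite A" "A \<noteq> {}" "\<forall>D\<in>A. \<forall>E\<in>A. fan_le D E \<or> fan_le E D" "A \<subseteq> F"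
  shows "\<exists>C\<in>A. \<forall>D\<in>A. fan_le D C"
  using assms
proof (induction A rule: finite_ne_induct)
  case (singleton x)
  then show ?case using le_refl by auto
next
  case (insert x A)
  then obtain m where m: "m \<in> A" "\<forall>D\<in>A. fan_le D m" by auto
  show ?case
  proof (cases "fan_le m x")
    case True
    have "\<forall>D\<in>insert x A. fan_le D x"
    proof
      fix D assume "D \<in> insert x A"
      then show "fan_le D x"
      proof
        assume "D = x" then show ?thesis using le_refl insert.prems by simp
      next
        assume "D \<in> A" then show ?thesis using m(2) True le_trans by blast
      qed
    qed
    then show ?thesis by blast
  next
    case False
    then have "fan_le x m" using insert.prems m by blast
    then show ?thesis using m by blast
  qed
qed

lemma cone_sum:
  assumes "convex K" "cone K" "0 \<in> K" "finite I" "\<And>i. i \<in> I \<Longrightarrow> g i \<in> K"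
  shows "sum g I \<in> K"
  using assms(4,5)
proof (induction I rule: finite_induct)
  case empty then show ?case using assms(3) by simp
next
  case (insert x I) then show ?case using cone_add[OF assms(1,2)] by simp
qed

lemma chain_supp: "chainfun c \<Longrightarrow> D \<in> supp c \<Longrightarrow> E \<in> supp c \<Longrightarrow> fan_le D E \<or> fan_le E D"
  unfolding chainfun_def supp_def by blast

lemma supp_L: "supp c \<subseteq> L" unfolding supp_def by auto

lemma L_F: "L \<subseteq> F" unfolding L_def by auto

lemma chain_zero:
  assumes "chainfun c" "D \<notin> supp c" shows "c D = 0"
proof (rule ccontr)
  assume nz: "c D \<noteq> 0"
  then have "D \<in> L" "0 \<le> c D" using assms(1) unfolding chainfun_def by auto
  then show False using assms(2) nz unfolding supp_def by auto
qed

lemma vs_closure: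
  assumes "chainfun c" "C \<in> F" "\<forall>D\<in>supp c. fan_le D C"
  shows "vs c \<in> closure C"
  unfolding vs_def
proof (rule cone_sum[OF basicF(1,2,7)[OF assms(2)] finL])
  fix D assume D: "D \<in> L"
  show "c D *\<^sub>R vv D \<in> closure C"
  proof (cases "D \<in> supp c")
    case True
    then have "vv D \<in> closure C" using assms(3) le_sub vvL[OF D] closure_subset by blast
    moreover have "0 \<le> c D" using assms(1) chainfun_def by blast
    ultimately show ?thesis using basicF(2)[OF assms(2)] unfolding cone_def by blast
  next
    case False
    then show ?thesis using chain_zero[OF assms(1)] basicF(7)[OF assms(2)] by simp
  qed
qed

lemma vs_split:
  assumes "C \<in> L"
  shows "vs c = c C *\<^sub>R vv C + vs (c(C := 0))"
proof -
  have "vs c = c C *\<^sub>R vv C + (\<Sum>D\<in>L-{C}. c D *\<^sub>R vv D)"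
    unfolding vs_def using sum.remove[OF finL assms] by simp
  moreover have "vs (c(C := 0)) = (\<Sum>D\<in>L-{C}. c D *\<^sub>R vv D)"
    unfolding vs_def using sum.remove[OF finL assms, of "\<lambda>D. (c(C:=0)) D *\<^sub>R vv D"]
    by simp
  ultimately show ?thesis by simp
qed

lemma chainfun_upd0: "chainfun c \<Longrightarrow> chainfun (c(C := 0))"
  unfolding chainfun_def by auto

lemma supp_upd0: "supp (c(C := 0)) = supp c - {C}"
  unfolding supp_def by auto

lemma vs_in_top:
  assumes "chainfun c" "C \<in> supp c" "\<forall>D\<in>supp c. fan_le D C"
  shows "vs c \<in> C"
proof -
  have CL: "C \<in> L" "C \<in> F" using assms(2) supp_L L_F by auto
  have "\<forall>D\<in>supp (c(C:=0)). fan_le D C" using assms(3) supp_upd0 by auto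
  then have "vs (c(C := 0)) \<in> closure C"
    using vs_closure[OF chainfun_upd0[OF assms(1)] CL(2)] by blast
  moreover have "c C *\<^sub>R vv C \<in> C"
    using ri_scale[OF CL(2) vvL(1)[OF CL(1)]] assms(2) supp_def by auto
  ultimately show ?thesis using vs_split[OF CL(1), of c] ri_add[OF CL(2)] by simp
qed

lemma vs_empty: "chainfun c \<Longrightarrow> supp c = {} \<Longrightarrow> vs c = 0"
  unfolding vs_def using chain_zero by (simp add: sum.neutral)

lemma vs_top:
  assumes "chainfun c" "supp c \<noteq> {}"
  obtains C where "C \<in> supp c" "\<forall>D\<in>supp c. fan_le D C" "vs c \<in> C"
proof -
  obtain C where "C \<in> supp c" "\<forall>D\<in>supp c. fan_le D C"
  proof -
    have "finite (supp c)" using finL supp_L rev_finite_subset by blast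
    then show ?thesis using has_max[of "supp c"] assms chain_supp that supp_L L_F by blast
  qed
  then show ?thesis using that vs_in_top assms(1) by blast
qed

lemma vs_nz: "chainfun c \<Longrightarrow> supp c \<noteq> {} \<Longrightarrow> vs c \<noteq> 0"
proof
  assume "chainfun c" "supp c \<noteq> {}" "vs c = 0"
  then obtain C where "C \<in> supp c" "vs c \<in> C" using vs_top by metis
  moreover have "C \<in> F" "C \<noteq> {0}" using calculation supp_L L_def by auto
  ultimately show False using zero_in \<open>vs c = 0\<close> by auto
qed


lemma rest_props:
  assumes "chainfun c" "C \<in> supp c" "\<forall>D\<in>supp c. fan_le D C"
  shows "vs (c(C:=0)) \<in> closure C" "vs (c(C:=0)) \<notin> C"
proof -
  have CL: "C \<in> L" "C \<in> F" using assms(2) supp_L L_F by auto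
  have ch: "chainfun (c(C:=0))" using chainfun_upd0[OF assms(1)] .
  have "\<forall>D\<in>supp (c(C:=0)). fan_le D C" using assms(3) supp_upd0 by auto
  then show "vs (c(C := 0)) \<in> closure C"
    using vs_closure[OF ch CL(2)] by blast
  show "vs (c(C:=0)) \<notin> C"
  proof (cases "supp (c(C:=0)) = {}")
    case True
    then have "vs (c(C:=0)) = 0" using vs_empty[OF ch] by simp
    moreover have "0 \<notin> C" using zero_in CL unfolding L_def by auto
    ultimately show ?thesis by simp
  next
    case False
    then obtain D where D: "D \<in> supp (c(C:=0))" "vs (c(C:=0)) \<in> D" using vs_top[OF ch] by metis
    have "D \<noteq> C" using D(1) supp_upd0 by auto
    have "D \<in> F" using D(1) supp_L L_F by blast
    then show ?thesis using disj[OF _ CL(2) D(2)] \<open>D \<noteq> C\<close> by blast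
  qed
qed

lemma vs_unique:
  "chainfun c \<Longrightarrow> chainfun c' \<Longrightarrow> vs c = vs c' \<Longrightarrow> c = c'"
proof (induction "card (supp c)" arbitrary: c c' rule: less_induct)
  case less
  show ?case
  proof (cases "supp c = {}")
    case True
    then have "vs c' = 0" using vs_empty less by simp
    then have "supp c' = {}" using vs_nz less.prems(2) by blast
    show ?thesis
    proof
      fix D show "c D = c' D"
        using chain_zero[OF less.prems(1), of D] chain_zero[OF less.prems(2), of D] True \<open>supp c' = {}\<close>
        by simp
    qed
  next
    case False
    obtain C where C: "C \<in> supp c" "\<forall>D\<in>supp c. fan_le D C" "vs c \<in> C"
      using vs_top[OF less.prems(1) False] by metis
    have "vs c \<noteq> 0" using vs_nz[OF less.prems(1) False] .
    then have "supp c' \<noteq> {}" using vs_empty[OF less.prems(2)] less.prems(3) by auto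
    then obtain C' where C': "C' \<in> supp c'" "\<forall>D\<in>supp c'. fan_le D C'" "vs c' \<in> C'"
      using vs_top[OF less.prems(2)] by metis
    have CL: "C \<in> L" "C \<in> F" "C' \<in> F" using C(1) C'(1) supp_L L_F by auto
    have "C' = C" using disj[OF CL(3) CL(2)] C'(3) C(3) less.prems(3) by simp
    note C' = C'[unfolded this]
    define y where "y = vs (c(C:=0))"
    define y' where "y' = vs (c'(C:=0))"
    have y: "y \<in> closure C" "y \<notin> C" using rest_props[OF less.prems(1) C(1,2)] y_def by auto
    have y': "y' \<in> closure C" "y' \<notin> C" using rest_props[OF less.prems(2) C'(1,2)] y'_def by auto
    have eq: "c C *\<^sub>R vv C + y = c' C *\<^sub>R vv C + y'"
      using vs_split[OF CL(1), of c] vs_split[OF CL(1), of c'] less.prems(3) y_def y'_def by simp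
    have v: "vv C \<in> C" using vvL[OF CL(1)] by simp
    have cc: "c C = c' C"
    proof (rule ccontr)
      assume "c C \<noteq> c' C"
      then consider "c C < c' C" | "c' C < c C" by linarith
      then show False
      proof cases
        case 1
        have "y = (c' C - c C) *\<^sub>R vv C + y'" using eq by (simp add: algebra_simps)
        moreover have "(c' C - c C) *\<^sub>R vv C + y' \<in> C"
          using ri_add[OF CL(2) ri_scale[OF CL(2) v] y'(1)] 1 by simp
        ultimately show False using y(2) by simp
      next
        case 2
        have "y' = (c C - c' C) *\<^sub>R vv C + y" using eq by (simp add: algebra_simps)
        moreover have "(c C - c' C) *\<^sub>R vv C + y \<in> C"
          using ri_add[OF CL(2) ri_scale[OF CL(2) v] y(1)] 2 by simp
        ultimately show False using y'(2) by simp
      qed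
    qed
    then have "y = y'" using eq by simp
    moreover have "card (supp (c(C:=0))) < card (supp c)"
    proof -
      have "finite (supp c)" using finL supp_L rev_finite_subset by blast
      then have "0 < card (supp c)" using C(1) card_gt_0_iff by blast
      then show ?thesis using supp_upd0 C(1) by simp
    qed
    ultimately have "c(C:=0) = c'(C:=0)"
      using less.hyps chainfun_upd0 less.prems y_def y'_def by blast
    then show ?thesis using cc by (metis fun_upd_triv fun_upd_upd)
  qed
qed


lemma vs_exists:
  "C \<in> F \<Longrightarrow> x \<in> C \<Longrightarrow> \<exists>c. chainfun c \<and> (\<forall>D\<in>supp c. fan_le D C) \<and> vs c = x"
proof (induction "card {E\<in>F. fan_le E C}" arbitrary: C x rule: less_induct)
  case less
  show ?case
  proof (cases "C = {0}")
    case True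
    have "chainfun (\<lambda>_. 0)" unfolding chainfun_def by simp
    moreover have "supp (\<lambda>_. 0) = {}" unfolding supp_def by simp
    moreover have "vs (\<lambda>_. 0) = x" using True less.prems unfolding vs_def by simp
    ultimately show ?thesis by blast
  next
    case False
    have CL: "C \<in> L" using False less.prems unfolding L_def by simp
    define v where "v = vv C"
    define K where "K = closure C"
    have v: "v \<in> C" "v \<noteq> 0" using vvL[OF CL] v_def by auto
    have vK: "v \<in> K" using v(1) closure_subset K_def by blast
    have xK: "x \<in> K" using less.prems(2) closure_subset K_def by blast
    have cvK: "convex K" "cone K" "closed K" using basicF[OF less.prems(1)] K_def by auto
    have nvK: "- v \<notin> K" using basicF(4)[OF less.prems(1)] vK v(2) K_def by blast
    have "open (- K)" using cvK(3) by auto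
    then obtain eps where eps: "eps > 0" "ball (- v) eps \<subseteq> - K"
      using nvK open_contains_ball by blast
    define Lam where "Lam = {l::real. 0 \<le> l \<and> x - l *\<^sub>R v \<in> K}"
    have bnd: "l \<le> norm x / eps" if l: "l \<in> Lam" for l
    proof (rule ccontr)
      assume "\<not> l \<le> norm x / eps"
      then have gt: "norm x / eps < l" by simp
      then have lpos: "l > 0" using eps by (smt (verit) divide_nonneg_pos norm_ge_zero)
      have "(1/l) *\<^sub>R (x - l *\<^sub>R v) \<in> K" using l cvK(2) lpos unfolding Lam_def cone_def by simp
      moreover have "(1/l) *\<^sub>R (x - l *\<^sub>R v) = (1/l) *\<^sub>R x - v" using lpos by (simp add: algebra_simps)
      moreover have "dist (- v) ((1/l) *\<^sub>R x - v) < eps"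
      proof -
        have "dist (- v) ((1/l) *\<^sub>R x - v) = norm x / l" using lpos by (simp add: dist_norm)
        also have "\<dots> < eps" using gt lpos eps by (simp add: field_simps)
        finally show ?thesis .
      qed
      ultimately show False using eps(2) by auto
    qed
    have clLam: "closed Lam"
    proof -
      have "Lam = {0..} \<inter> (\<lambda>l. x - l *\<^sub>R v) -` K" unfolding Lam_def by auto
      moreover have "closed ((\<lambda>l. x - l *\<^sub>R v) -` K)"
        by (rule continuous_closed_vimage[OF cvK(3)]) (intro continuous_intros)
      ultimately show ?thesis by (simp add: closed_Int)
    qed
    have "bounded Lam"
      using bnd unfolding bounded_iff Lam_def by (metis (mono_tags, lifting) mem_Collect_eq real_norm_def abs_of_nonneg)
    then have "compact Lam" using clLam compact_eq_bounded_closed by blast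
    moreover have "0 \<in> Lam" using xK unfolding Lam_def by simp
    ultimately obtain l where l: "l \<in> Lam" "\<forall>t\<in>Lam. t \<le> l"
      using compact_attains_sup[of Lam] by blast
    define y where "y = x - l *\<^sub>R v"
    have yK: "y \<in> K" using l(1) y_def Lam_def by simp
    have yC: "y \<notin> C"
    proof
      assume "y \<in> C"
      then have "y \<in> rel_interior K" using basicF(5)[OF less.prems(1)] K_def by simp
      then obtain e where e: "e > 0" "cball y e \<inter> affine hull K \<subseteq> K"
        using mem_rel_interior_cball by blast
      have aff: "affine hull K = span K"
      proof (rule affine_hull_span_0)
        have "0 \<in> K" using basicF(7)[OF less.prems(1)] K_def by simp
        then show "0 \<in> affine hull K" by (rule hull_inc)
      qed
      define p where "p = y - (e / norm v) *\<^sub>R v"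
      have "p \<in> cball y e" using v(2) e(1) p_def by (simp add: dist_norm)
      moreover have "p \<in> affine hull K" unfolding aff p_def
        by (intro span_diff span_mul span_base yK vK)
      ultimately have "p \<in> K" using e by blast
      moreover have "p = x - (l + e / norm v) *\<^sub>R v" using p_def y_def by (simp add: algebra_simps)
      moreover have "0 \<le> l + e / norm v" using l(1) e(1) Lam_def by simp
      ultimately have "l + e / norm v \<in> Lam" unfolding Lam_def by simp
      then have "l + e / norm v \<le> l" using l(2) by blast
      moreover have "e / norm v > 0" using e(1) v(2) by simp
      ultimately show False by simp
    qed
    obtain D where D: "D \<in> F" "y \<in> D" "fan_le D C"
      using below[OF less.prems(1)] yK K_def by metis
    have DC: "D \<noteq> C" using D(2) yC by blast
    have "card {E\<in>F. fan_le E D} < card {E\<in>F. fan_le E C}"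
    proof (rule psubset_card_mono)
      show "finite {E\<in>F. fan_le E C}" using finF by simp
      have "{E\<in>F. fan_le E D} \<subseteq> {E\<in>F. fan_le E C}" using D(3) le_trans by blast
      moreover have "C \<in> {E\<in>F. fan_le E C}" using le_refl less.prems(1) by blast
      moreover have "C \<notin> {E\<in>F. fan_le E D}" using le_antisym D DC less.prems(1) by blast
      ultimately show "{E\<in>F. fan_le E D} \<subset> {E\<in>F. fan_le E C}" by blast
    qed
    then obtain c' where c': "chainfun c'" "\<forall>E\<in>supp c'. fan_le E D" "vs c' = y"
      using less.hyps D(1,2) by blast
    have Cns: "C \<notin> supp c'" using c'(2) le_antisym D DC less.prems(1) by blast
    have c'C: "c' C = 0" using chain_zero[OF c'(1) Cns] .
    define c where "c = c'(C := l)"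
    have l0: "0 \<le> l" using l(1) Lam_def by simp
    have suppc: "supp c \<subseteq> insert C (supp c')" unfolding c_def supp_def by auto
    have allC: "\<forall>E\<in>supp c. fan_le E C"
    proof
      fix E assume "E \<in> supp c"
      then consider "E = C" | "E \<in> supp c'" using suppc by blast
      then show "fan_le E C"
      proof cases
        case 1 then show ?thesis using le_refl less.prems(1) by simp
      next
        case 2 then show ?thesis using c'(2) D(3) le_trans by blast
      qed
    qed
    have chc: "chainfun c"
      unfolding chainfun_def
    proof (intro conjI allI impI)
      fix E show "0 \<le> c E" using c'(1) l0 unfolding c_def chainfun_def by simp
    next
      fix E assume "c E \<noteq> 0"
      then show "E \<in> L" using c'(1) CL unfolding c_def chainfun_def by (cases "E = C") auto
    next
      fix E1 E2 assume a: "0 < c E1 \<and> 0 < c E2"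
      have "E1 \<in> L" "E2 \<in> L" using a c'(1) CL unfolding c_def chainfun_def
        by (metis fun_upd_apply less_irrefl)+
      then have "E1 \<in> supp c" "E2 \<in> supp c" using a unfolding supp_def by auto
      then have s: "E1 \<in> insert C (supp c')" "E2 \<in> insert C (supp c')" using suppc by auto
      show "fan_le E1 E2 \<or> fan_le E2 E1"
      proof (cases "E1 = C \<or> E2 = C")
        case True
        then show ?thesis using allC \<open>E1 \<in> supp c\<close> \<open>E2 \<in> supp c\<close> by blast
      next
        case False
        then have "E1 \<in> supp c'" "E2 \<in> supp c'" using s by auto
        then show ?thesis using chain_supp[OF c'(1)] by blast
      qed
    qed
    have "vs c = l *\<^sub>R v + vs (c(C:=0))" using vs_split[OF CL, of c] v_def c_def by simp
    moreover have "c(C:=0) = c'" using c'C c_def by (metis fun_upd_triv fun_upd_upd)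
    ultimately have "vs c = x" using c'(3) y_def by simp
    then show ?thesis using chc allC by blast
  qed
qed


end

context fan begin

lemma continuous_map_scaleR':
  fixes g :: "'b \<Rightarrow> 'c::real_normed_vector"
  shows "continuous_map X euclideanreal f \<Longrightarrow> continuous_map X euclidean g \<Longrightarrow>
    continuous_map X euclidean (\<lambda>x. f x *\<^sub>R g x)"
  by (simp add: continuous_map_atin tendsto_scaleR)

lemma proj_cont: "continuous_map (powertop_real UNIV) euclideanreal (\<lambda>t. t x)"
  using continuous_map_product_projection[of x UNIV "\<lambda>_. euclideanreal"] by simp

lemma closedin_all:
  assumes "\<And>i. i \<in> I \<Longrightarrow> continuous_map (powertop_real UNIV) euclideanreal (g i)"
    "\<And>i. i \<in> I \<Longrightarrow> closed (C i)"
  shows "closedin (powertop_real UNIV) {t. \<forall>i\<in>I. g i t \<in> C i}"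
proof -
  have eq: "{t. \<forall>i\<in>I. g i t \<in> C i} = \<Inter>(insert UNIV ((\<lambda>i. {t \<in> topspace (powertop_real UNIV). g i t \<in> C i}) ` I))"
    by auto
  show ?thesis unfolding eq
  proof (rule closedin_Inter)
    fix S assume "S \<in> insert UNIV ((\<lambda>i. {t \<in> topspace (powertop_real UNIV). g i t \<in> C i}) ` I)"
    then show "closedin (powertop_real UNIV) S"
    proof
      assume "S = UNIV"
      then show ?thesis using closedin_topspace[of "powertop_real UNIV"] by simp
    next
      assume "S \<in> (\<lambda>i. {t \<in> topspace (powertop_real UNIV). g i t \<in> C i}) ` I"
      then obtain i where "i \<in> I" "S = {t \<in> topspace (powertop_real UNIV). g i t \<in> C i}" by blast
      moreover have "closedin euclideanreal (C i)" using assms(2) \<open>i \<in> I\<close> closed_closedin by blast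
      ultimately show ?thesis using closedin_continuous_map_preimage[OF assms(1)[OF \<open>i \<in> I\<close>]] by blast
    qed
  qed simp
qed

definition "Sig P = {t::'a set \<Rightarrow> real. (\<forall>x. 0 \<le> t x) \<and> (\<forall>x. x \<notin> P \<longrightarrow> t x = 0) \<and> sum t P = 1 \<and>
           (\<forall>x y. 0 < t x \<and> 0 < t y \<longrightarrow> fan_le x y \<or> fan_le y x)}"

lemma ocr_eq: "order_complex_realization P fan_le = subtopology (powertop_real UNIV) (Sig P)"
  unfolding order_complex_realization_def Sig_def by simp

lemma top_ocr: "topspace (order_complex_realization P fan_le) = Sig P"
  unfolding ocr_eq by simp

lemma closed_SigL: "closedin (powertop_real UNIV) (Sig L)"
proof -
  define NC where "NC = {p::'a set \<times> 'a set. \<not> (fan_le (fst p) (snd p) \<or> fan_le (snd p) (fst p))}"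
  have eq: "Sig L = {t. \<forall>x\<in>UNIV. t x \<in> {0..}} \<inter> {t. \<forall>x\<in>-L. t x \<in> {0}} \<inter>
     {t. \<forall>i\<in>{()}. sum t L \<in> {1}} \<inter> {t. \<forall>p\<in>NC. min (t (fst p)) (t (snd p)) \<in> {..0}}"
    unfolding Sig_def NC_def by (auto simp: min_le_iff_disj; meson not_le)
  show ?thesis unfolding eq
    by (intro closedin_Int closedin_all proj_cont continuous_map_sum finL continuous_map_real_min) auto
qed

lemma compact_SigL: "compact_space (order_complex_realization L fan_le)"
  unfolding ocr_eq
proof (rule compact_space_subtopology)
  define B where "B = (\<lambda>D::'a set. if D \<in> L then {0..1::real} else {0})"
  have "compactin (powertop_real UNIV) (PiE UNIV B)"
    unfolding compactin_PiE B_def by auto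
  moreover have "Sig L \<subseteq> PiE UNIV B"
  proof
    fix t assume t: "t \<in> Sig L"
    have "t D \<le> 1" if "D \<in> L" for D
    proof -
      have "t D \<le> sum t L" using t that finL unfolding Sig_def by (intro member_le_sum) auto
      then show ?thesis using t unfolding Sig_def by simp
    qed
    then show "t \<in> PiE UNIV B" using t unfolding Sig_def B_def PiE_def Pi_def extensional_def by auto
  qed
  ultimately show "compactin (powertop_real UNIV) (Sig L)"
    using closed_compactin closed_SigL by blast
qed

end

context fan begin

lemma Sig_props:
  assumes "P \<subseteq> L" "t \<in> Sig P"
  shows "chainfun t" "supp t \<noteq> {}" "t \<in> Sig L"
proof -
  show ch: "chainfun t" using assms unfolding Sig_def chainfun_def by blast
  have sP: "sum t P = 1" using assms(2) unfolding Sig_def by blast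
  have z: "\<forall>x. x \<notin> P \<longrightarrow> t x = 0" using assms(2) unfolding Sig_def by blast
  have "sum t L = sum t P"
    using sum.mono_neutral_right[OF finL assms(1), of t] z by blast
  moreover have "\<forall>x. x \<notin> L \<longrightarrow> t x = 0" using z assms(1) by blast
  ultimately show "t \<in> Sig L" using assms(2) sP unfolding Sig_def by simp
  show "supp t \<noteq> {}"
  proof
    assume "supp t = {}"
    then have "\<And>D. t D = 0" using chain_zero[OF ch] by simp
    then show False using sP by simp
  qed
qed

definition "G t = (1 / norm (vs t)) *\<^sub>R vs t"

lemma vs_cont: "continuous_map (powertop_real UNIV) euclidean vs"
proof -
  have "continuous_map (powertop_real UNIV) euclidean (\<lambda>t. \<Sum>D\<in>L. t D *\<^sub>R vv D)"
    by (intro continuous_map_sum finL continuous_map_scaleR' proj_cont continuous_map_canonical_const)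
  then show ?thesis unfolding vs_def[abs_def] .
qed

lemma G_cont: "continuous_map (order_complex_realization L fan_le) euclidean G"
proof -
  have vc: "continuous_map (order_complex_realization L fan_le) euclidean vs"
    unfolding ocr_eq by (rule continuous_map_from_subtopology[OF vs_cont])
  have nz: "vs t \<noteq> 0" if "t \<in> topspace (order_complex_realization L fan_le)" for t
    using that Sig_props[of L t] vs_nz top_ocr by auto
  have "continuous_map (order_complex_realization L fan_le) euclidean (\<lambda>t. (1 / norm (vs t)) *\<^sub>R vs t)"
    by (intro continuous_map_scaleR' vc continuous_map_real_divide continuous_map_norm
        continuous_map_canonical_const) (use nz in auto)
  then show ?thesis unfolding G_def[abs_def] .
qed

lemma G_sphere: "t \<in> Sig L \<Longrightarrow> G t \<in> sphere 0 1"
  using Sig_props[of L t] vs_nz unfolding G_def by auto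

lemma vs_scale: "vs (\<lambda>D. k * c D) = k *\<^sub>R vs c"
  unfolding vs_def by (simp add: scaleR_sum_right)

lemma G_surj: "sphere 0 1 \<subseteq> G ` Sig L"
proof
  fix x :: 'a assume x: "x \<in> sphere 0 1"
  obtain C where C: "C \<in> F" "x \<in> C" using coverF by blast
  obtain c where c: "chainfun c" "vs c = x" using vs_exists[OF C] by blast
  have x0: "x \<noteq> 0" using x by auto
  have sne: "supp c \<noteq> {}" using vs_empty[OF c(1)] c(2) x0 by auto
  then obtain D where D: "D \<in> supp c" by blast
  have nn: "\<forall>E. 0 \<le> c E" using c(1) unfolding chainfun_def by blast
  define s where "s = sum c L"
  have "c D \<le> s" unfolding s_def using D supp_L finL nn by (intro member_le_sum) auto
  then have spos: "s > 0" using D unfolding supp_def by simp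
  define t where "t = (\<lambda>E. (1/s) * c E)"
  have "t \<in> Sig L"
    unfolding Sig_def
  proof (intro CollectI conjI allI impI)
    fix E show "0 \<le> t E" using nn spos t_def by simp
  next
    fix E assume "E \<notin> L" then show "t E = 0" using c(1) t_def unfolding chainfun_def by auto
  next
    have "sum t L = (1/s) * sum c L" unfolding t_def by (simp add: sum_distrib_left)
    then show "sum t L = 1" using spos s_def by simp
  next
    fix E1 E2 assume "0 < t E1 \<and> 0 < t E2"
    then have "0 < c E1 \<and> 0 < c E2" using spos t_def by (simp add: zero_less_divide_iff)
    then show "fan_le E1 E2 \<or> fan_le E2 E1" using c(1) unfolding chainfun_def by blast
  qed
  moreover have "G t = x"
  proof -
    have "vs t = (1/s) *\<^sub>R x" unfolding t_def vs_scale c(2) ..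
    then show ?thesis unfolding G_def using spos x by simp
  qed
  ultimately show "x \<in> G ` Sig L" by blast
qed

lemma G_inj: "inj_on G (Sig L)"
proof
  fix t1 t2 assume t: "t1 \<in> Sig L" "t2 \<in> Sig L" and eq: "G t1 = G t2"
  have ch: "chainfun t1" "chainfun t2" using Sig_props(1)[OF order_refl] t by simp_all
  have nz: "vs t1 \<noteq> 0" "vs t2 \<noteq> 0"
    using vs_nz[OF ch(1) Sig_props(2)[OF order_refl t(1)]] vs_nz[OF ch(2) Sig_props(2)[OF order_refl t(2)]] by simp_all
  define k where "k = norm (vs t2) / norm (vs t1)"
  have kpos: "k > 0" using nz k_def by simp
  have "vs t2 = k *\<^sub>R vs t1"
  proof -
    have "vs t2 = norm (vs t2) *\<^sub>R G t2" unfolding G_def using nz by simp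
    also have "\<dots> = norm (vs t2) *\<^sub>R G t1" using eq by simp
    also have "\<dots> = k *\<^sub>R vs t1" unfolding G_def k_def by simp
    finally show ?thesis .
  qed
  then have "vs (\<lambda>D. k * t1 D) = vs t2" using vs_scale by simp
  moreover have "chainfun (\<lambda>D. k * t1 D)"
    using ch(1) kpos unfolding chainfun_def by (simp add: zero_less_mult_iff)
  ultimately have e2: "(\<lambda>D. k * t1 D) = t2" using vs_unique[OF _ ch(2)] by simp
  have "sum t2 L = k * sum t1 L" unfolding e2[symmetric] by (simp add: sum_distrib_left)
  then have "k = 1" using t unfolding Sig_def by simp
  then show "t1 = t2" using e2 by simp
qed

lemma G_homeo: "homeomorphic_map (order_complex_realization L fan_le) (top_of_set (sphere 0 1)) G"
proof (rule continuous_imp_homeomorphic_map)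
  show "continuous_map (order_complex_realization L fan_le) (top_of_set (sphere 0 1)) G"
    using G_cont G_sphere top_ocr by (simp add: continuous_map_in_subtopology Pi_iff)
  show "compact_space (order_complex_realization L fan_le)" by (rule compact_SigL)
  show "Hausdorff_space (top_of_set (sphere (0::'a) 1))"
    by (rule Hausdorff_space_subtopology) simp
  show "G ` topspace (order_complex_realization L fan_le) = topspace (top_of_set (sphere 0 1))"
    using G_surj G_sphere top_ocr by auto
  show "inj_on G (topspace (order_complex_realization L fan_le))"
    using G_inj top_ocr by simp
qed

end

locale fsetup = fan F for F :: "'a::euclidean_space set set" +
  fixes Up Um :: "'a set" and f :: "'a \<Rightarrow> real"
  assumes Up: "Up \<noteq> {}" "convex Up" "\<exists>S\<subseteq>F. Up = \<Union>S"
    and Um: "Um \<noteq> {}" "convex Um" "\<exists>S\<subseteq>F. Um = \<Union>S"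
    and lin: "linear f" and fUp: "\<forall>x\<in>Up. f x > 0" and fUm: "\<forall>x\<in>Um. f x < 0"
begin

definition "P = L - {C\<in>F. C \<noteq> {0} \<and> C \<subseteq> Up \<union> Um}"
definition "Ws = sphere 0 1 - (Up \<union> Um)"

lemma P_L: "P \<subseteq> L" unfolding P_def by auto

lemma union_cone:
  assumes "\<exists>S\<subseteq>F. U = \<Union>S" "C \<in> F" "x \<in> C" "x \<in> U"
  shows "C \<subseteq> U"
proof -
  obtain S where S: "S \<subseteq> F" "U = \<Union>S" using assms(1) by blast
  then obtain D where "D \<in> S" "x \<in> D" using assms(4) by blast
  then have "D = C" using disj[OF _ assms(2) _ assms(3)] S(1) by blast
  then show ?thesis using \<open>D \<in> S\<close> S(2) by blast
qed

lemma G_top: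
  assumes "t \<in> Sig L" "C \<in> supp t" "\<forall>D\<in>supp t. fan_le D C"
  shows "G t \<in> C"
proof -
  have ch: "chainfun t" using Sig_props(1)[OF order_refl assms(1)] .
  have "vs t \<in> C" using vs_in_top[OF ch assms(2,3)] .
  moreover have "vs t \<noteq> 0" using vs_nz[OF ch] assms(2) by blast
  moreover have "C \<in> F" using assms(2) supp_L L_F by blast
  ultimately show ?thesis unfolding G_def using ri_scale by simp
qed

lemma G_Ws:
  assumes "t \<in> Sig L" "C \<in> supp t" "\<forall>D\<in>supp t. fan_le D C"
  shows "G t \<in> Ws \<longleftrightarrow> C \<in> P"
proof -
  have g: "G t \<in> C" using G_top[OF assms] .
  have CL: "C \<in> L" "C \<in> F" using assms(2) supp_L L_F by blast+
  have gs: "G t \<in> sphere 0 1" using G_sphere[OF assms(1)] .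
  show ?thesis
  proof
    assume "G t \<in> Ws"
    then have "G t \<notin> Up" "G t \<notin> Um" unfolding Ws_def by auto
    then have "\<not> C \<subseteq> Up \<union> Um" using g by blast
    then show "C \<in> P" using CL unfolding P_def by blast
  next
    assume "C \<in> P"
    then have nC: "\<not> C \<subseteq> Up \<union> Um" using CL unfolding P_def L_def by blast
    have "G t \<notin> Up" using union_cone[OF Up(3) CL(2) g] nC by blast
    moreover have "G t \<notin> Um" using union_cone[OF Um(3) CL(2) g] nC by blast
    ultimately show "G t \<in> Ws" using gs unfolding Ws_def by blast
  qed
qed

lemma top_exists:
  assumes "t \<in> Sig L"
  obtains C where "C \<in> supp t" "\<forall>D\<in>supp t. fan_le D C"
  using vs_top[OF Sig_props(1,2)[OF order_refl assms]] by metis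

end

context fsetup begin

lemma SigP_L: "Sig P \<subseteq> Sig L" using Sig_props(3)[OF P_L] by blast

lemma ocrP_sub: "order_complex_realization P fan_le = subtopology (order_complex_realization L fan_le) (Sig P)"
  unfolding ocr_eq subtopology_subtopology using SigP_L by (simp add: Int_absorb1)

lemma Ws_sub: "top_of_set Ws = subtopology (top_of_set (sphere 0 1)) Ws"
  unfolding subtopology_subtopology Ws_def by (simp add: Int_absorb1 Diff_subset)

lemma finP: "finite P" using finite_subset[OF P_L finL] .

lemma PWs: "order_complex_realization P fan_le homotopy_equivalent_space top_of_set Ws"
proof -
  obtain \<beta> where hm: "homeomorphic_maps (order_complex_realization L fan_le) (top_of_set (sphere 0 1)) G \<beta>"
    using G_homeo homeomorphic_map_maps by blast
  have c\<beta>: "continuous_map (top_of_set (sphere 0 1)) (order_complex_realization L fan_le) \<beta>"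
    using hm unfolding homeomorphic_maps_def by blast
  have \<beta>G: "\<And>t. t \<in> Sig L \<Longrightarrow> \<beta> (G t) = t"
    using hm unfolding homeomorphic_maps_def top_ocr by simp
  have G\<beta>: "\<And>x. x \<in> sphere 0 1 \<Longrightarrow> G (\<beta> x) = x"
    using hm unfolding homeomorphic_maps_def by simp
  have \<beta>S: "\<beta> x \<in> Sig L" if "x \<in> sphere 0 1" for x
    using continuous_map_funspace[OF c\<beta>] that top_ocr by fastforce
  have WsS: "Ws \<subseteq> sphere 0 1" unfolding Ws_def by blast
  have c\<beta>W: "continuous_map (top_of_set Ws) (order_complex_realization L fan_le) \<beta>"
    unfolding Ws_sub by (rule continuous_map_from_subtopology[OF c\<beta>])
  have comp: "continuous_map (top_of_set Ws) euclideanreal (\<lambda>x. \<beta> x D)" for D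
  proof -
    have "continuous_map (order_complex_realization L fan_le) euclideanreal (\<lambda>t. t D)"
      unfolding ocr_eq by (rule continuous_map_from_subtopology[OF proj_cont])
    from continuous_map_compose[OF c\<beta>W this] show ?thesis by (simp add: o_def)
  qed
  define sP where "sP x = (\<Sum>D\<in>P. \<beta> x D)" for x
  have topP: "\<exists>C. C \<in> supp (\<beta> x) \<and> (\<forall>D\<in>supp (\<beta> x). fan_le D C) \<and> C \<in> P" if x: "x \<in> Ws" for x
  proof -
    have xs: "x \<in> sphere 0 1" using x WsS by blast
    obtain C where C: "C \<in> supp (\<beta> x)" "\<forall>D\<in>supp (\<beta> x). fan_le D C"
      using top_exists[OF \<beta>S[OF xs]] by blast
    have "G (\<beta> x) \<in> Ws" using G\<beta>[OF xs] x by simp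
    then have "C \<in> P" using G_Ws[OF \<beta>S[OF xs] C] by simp
    then show ?thesis using C by blast
  qed
  have nn: "\<And>x D. x \<in> Ws \<Longrightarrow> 0 \<le> \<beta> x D"
    using \<beta>S WsS unfolding Sig_def by blast
  have sPpos: "sP x > 0" if x: "x \<in> Ws" for x
  proof -
    obtain C where C: "C \<in> supp (\<beta> x)" "C \<in> P" using topP[OF x] by blast
    have "\<beta> x C \<le> sP x" unfolding sP_def using finP C(2) nn[OF x] by (intro member_le_sum) auto
    moreover have "\<beta> x C > 0" using C(1) unfolding supp_def by blast
    ultimately show ?thesis by simp
  qed
  define Hm where "Hm x = (\<lambda>D. if D \<in> P then \<beta> x D / sP x else 0)" for x
  have HmS: "Hm x \<in> Sig P" if x: "x \<in> Ws" for x
    unfolding Sig_def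
  proof (intro CollectI conjI allI impI)
    fix D show "0 \<le> Hm x D" unfolding Hm_def using nn[OF x] sPpos[OF x] by simp
  next
    fix D assume "D \<notin> P" then show "Hm x D = 0" unfolding Hm_def by simp
  next
    have "sum (Hm x) P = (\<Sum>D\<in>P. \<beta> x D / sP x)" unfolding Hm_def by simp
    also have "\<dots> = sP x / sP x" by (simp only: sum_divide_distrib[symmetric] sP_def)
    also have "\<dots> = 1" using sPpos[OF x] by simp
    finally show "sum (Hm x) P = 1" .
  next
    fix D E assume a: "0 < Hm x D \<and> 0 < Hm x E"
    then have "0 < \<beta> x D \<and> 0 < \<beta> x E" unfolding Hm_def using sPpos[OF x]
      by (auto split: if_splits simp: zero_less_divide_iff)
    then show "fan_le D E \<or> fan_le E D" using \<beta>S x WsS unfolding Sig_def by blast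
  qed
  have HmC: "continuous_map (top_of_set Ws) (order_complex_realization P fan_le) Hm"
    unfolding ocr_eq continuous_map_in_subtopology
  proof
    show "continuous_map (top_of_set Ws) (powertop_real UNIV) Hm"
      unfolding continuous_map_componentwise_UNIV
    proof
      fix D
      show "continuous_map (top_of_set Ws) euclideanreal (\<lambda>x. Hm x D)"
      proof (cases "D \<in> P")
        case True
        have "continuous_map (top_of_set Ws) euclideanreal (\<lambda>x. \<beta> x D / sP x)"
        proof (rule continuous_map_real_divide[OF comp])
          show "continuous_map (top_of_set Ws) euclideanreal sP"
            unfolding sP_def[abs_def] by (intro continuous_map_sum finP comp)
          show "\<And>x. x \<in> topspace (top_of_set Ws) \<Longrightarrow> sP x \<noteq> 0" using sPpos by fastforce
        qed
        then show ?thesis unfolding Hm_def using True by simp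
      next
        case False
        then show ?thesis unfolding Hm_def by simp
      qed
    qed
    show "Hm \<in> topspace (top_of_set Ws) \<rightarrow> Sig P" using HmS by simp
  qed
  have Gc: "continuous_map (order_complex_realization P fan_le) (top_of_set Ws) G"
    unfolding continuous_map_in_subtopology
  proof
    show "continuous_map (order_complex_realization P fan_le) euclidean G"
      unfolding ocrP_sub by (rule continuous_map_from_subtopology[OF G_cont])
    show "G \<in> topspace (order_complex_realization P fan_le) \<rightarrow> Ws"
    proof
      fix t assume "t \<in> topspace (order_complex_realization P fan_le)"
      then have t: "t \<in> Sig P" using top_ocr by simp
      then have tL: "t \<in> Sig L" using SigP_L by blast
      obtain C where C: "C \<in> supp t" "\<forall>D\<in>supp t. fan_le D C" using top_exists[OF tL] by blast
      have "C \<in> P" using C(1) t unfolding supp_def Sig_def by force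
      then show "G t \<in> Ws" using G_Ws[OF tL C] by simp
    qed
  qed
  have h1: "homotopic_with (\<lambda>x. True) (order_complex_realization P fan_le) (order_complex_realization P fan_le) (Hm \<circ> G) id"
  proof (rule homotopic_with_equal)
    show "continuous_map (order_complex_realization P fan_le) (order_complex_realization P fan_le) (Hm \<circ> G)"
      using continuous_map_compose[OF Gc HmC] .
    fix t assume "t \<in> topspace (order_complex_realization P fan_le)"
    then have t: "t \<in> Sig P" using top_ocr by simp
    then have tL: "t \<in> Sig L" using SigP_L by blast
    have "G t \<in> Ws" using Gc t top_ocr continuous_map_funspace by fastforce
    have b: "\<beta> (G t) = t" using \<beta>G[OF tL] .
    have s1: "sP (G t) = 1" unfolding sP_def b using t unfolding Sig_def by simp
    show "(Hm \<circ> G) t = id t"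
    proof
      fix D show "(Hm \<circ> G) t D = id t D"
        using t s1 b unfolding Hm_def Sig_def by auto
    qed
  qed auto
  define mix where "mix p = (\<lambda>D. (1 - fst p) * Hm (snd p) D + fst p * \<beta> (snd p) D)" for p :: "real \<times> 'a"
  have mixS: "mix (s, x) \<in> Sig L \<and> G (mix (s, x)) \<in> Ws" if s: "s \<in> {0..1}" and x: "x \<in> Ws" for s x
  proof -
    have xs: "x \<in> sphere 0 1" using x WsS by blast
    have bS: "\<beta> x \<in> Sig L" using \<beta>S[OF xs] .
    have hS: "Hm x \<in> Sig L" using HmS[OF x] SigP_L by blast
    have pos: "0 < \<beta> x D" if "0 < mix (s, x) D" for D
    proof (rule ccontr)
      assume "\<not> 0 < \<beta> x D"
      then have "\<beta> x D = 0" using nn[OF x, of D] by simp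
      then have "Hm x D = 0" unfolding Hm_def by simp
      then show False using that \<open>\<beta> x D = 0\<close> unfolding mix_def by simp
    qed
    have mS: "mix (s, x) \<in> Sig L"
      unfolding Sig_def
    proof (intro CollectI conjI allI impI)
      fix D show "0 \<le> mix (s, x) D"
        using s hS bS unfolding mix_def Sig_def by (simp add: add_nonneg_nonneg mult_nonneg_nonneg)
    next
      fix D assume "D \<notin> L" then show "mix (s, x) D = 0"
        using hS bS unfolding mix_def Sig_def by simp
    next
      have "sum (mix (s, x)) L = (1 - s) * sum (Hm x) L + s * sum (\<beta> x) L"
        unfolding mix_def by (simp add: sum.distrib sum_distrib_left)
      then show "sum (mix (s, x)) L = 1" using hS bS unfolding Sig_def by simp
    next
      fix D E assume "0 < mix (s, x) D \<and> 0 < mix (s, x) E"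
      then have "0 < \<beta> x D \<and> 0 < \<beta> x E" using pos by blast
      then show "fan_le D E \<or> fan_le E D" using bS unfolding Sig_def by blast
    qed
    obtain C where C: "C \<in> supp (\<beta> x)" "\<forall>D\<in>supp (\<beta> x). fan_le D C" "C \<in> P" using topP[OF x] by blast
    have bC: "\<beta> x C > 0" using C(1) supp_def by blast
    have hC: "Hm x C > 0" unfolding Hm_def using C(3) bC sPpos[OF x] by simp
    have mC: "mix (s, x) C > 0"
    proof -
      have "(1 - s) * Hm x C \<ge> 0" "s * \<beta> x C \<ge> 0" using s hC bC by auto
      moreover have "(1 - s) * Hm x C > 0 \<or> s * \<beta> x C > 0" using s hC bC by (cases "s = 1") auto
      ultimately show ?thesis unfolding mix_def fst_conv snd_conv by linarith
    qed
    have C1: "C \<in> supp (mix (s, x))" using mC C(1) unfolding supp_def by blast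
    have C2: "\<forall>D\<in>supp (mix (s, x)). fan_le D C"
    proof
      fix D assume "D \<in> supp (mix (s, x))"
      then have "D \<in> supp (\<beta> x)" using pos unfolding supp_def by blast
      then show "fan_le D C" using C(2) by blast
    qed
    show ?thesis using mS G_Ws[OF mS C1 C2] C(3) by blast
  qed
  have h2: "homotopic_with (\<lambda>x. True) (top_of_set Ws) (top_of_set Ws) (G \<circ> Hm) (\<lambda>x. G (\<beta> x))"
    unfolding homotopic_with_def
  proof (intro exI conjI allI ballI)
    let ?PT = "prod_topology (top_of_set {0..1::real}) (top_of_set Ws)"
    have cfst: "continuous_map ?PT euclideanreal fst"
      by (simp add: continuous_on_fst[OF continuous_on_id])
    have csnd: "continuous_map ?PT euclideanreal (\<lambda>p. g (snd p))"
      if "continuous_map (top_of_set Ws) euclideanreal g" for g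
      using continuous_map_compose[OF continuous_map_snd that] by (simp only: o_def)
    have cHm: "continuous_map (top_of_set Ws) euclideanreal (\<lambda>x. Hm x D)" for D
    proof -
      have p: "continuous_map (order_complex_realization P fan_le) euclideanreal (\<lambda>t. t D)"
        unfolding ocr_eq by (rule continuous_map_from_subtopology[OF proj_cont])
      from continuous_map_compose[OF HmC p] show ?thesis by (simp only: o_def)
    qed
    have cmix: "continuous_map ?PT (order_complex_realization L fan_le) mix"
      unfolding ocr_eq continuous_map_in_subtopology
    proof
      show "continuous_map ?PT (powertop_real UNIV) mix"
        unfolding continuous_map_componentwise_UNIV mix_def
        by (intro allI continuous_map_add continuous_map_real_mult continuous_map_diff
            continuous_map_canonical_const cfst csnd cHm comp)
      show "mix \<in> topspace ?PT \<rightarrow> Sig L" using mixS by force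
    qed
    show "continuous_map ?PT (top_of_set Ws) (G \<circ> mix)"
      unfolding continuous_map_in_subtopology
    proof
      show "continuous_map ?PT euclidean (G \<circ> mix)" using continuous_map_compose[OF cmix G_cont] .
      show "G \<circ> mix \<in> topspace ?PT \<rightarrow> Ws" using mixS by force
    qed
    fix x
    show "(G \<circ> mix) (0, x) = (G \<circ> Hm) x" unfolding mix_def by simp
    show "(G \<circ> mix) (1, x) = G (\<beta> x)" unfolding mix_def by simp
  qed auto
  have h2': "homotopic_with (\<lambda>x. True) (top_of_set Ws) (top_of_set Ws) (G \<circ> Hm) id"
    by (rule homotopic_with_eq[OF h2]) (use G\<beta> WsS in auto)
  show ?thesis unfolding homotopy_equivalent_space_def using Gc HmC h1 h2' by blast
qed

end

context fsetup begin

lemma U_scale: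
  assumes "\<exists>S\<subseteq>F. U = \<Union>S" "x \<in> U" "c > 0"
  shows "c *\<^sub>R x \<in> U"
proof -
  obtain S where S: "S \<subseteq> F" "U = \<Union>S" using assms(1) by blast
  then obtain D where "D \<in> S" "x \<in> D" using assms(2) by blast
  then have "c *\<^sub>R x \<in> D" using ri_scale S(1) assms(3) by blast
  then show ?thesis using \<open>D \<in> S\<close> S(2) by blast
qed

lemma U_add:
  assumes "\<exists>S\<subseteq>F. U = \<Union>S" "convex U" "x \<in> U" "y \<in> U"
  shows "x + y \<in> U"
proof -
  have "(1/2) *\<^sub>R x + (1/2) *\<^sub>R y \<in> U" using assms(2-4) by (intro convexD) auto
  then have "2 *\<^sub>R ((1/2) *\<^sub>R x + (1/2) *\<^sub>R y) \<in> U" using U_scale[OF assms(1)] by simp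
  then show ?thesis by (simp add: scaleR_add_right)
qed

definition "Sf = sphere 0 1 \<inter> {x. f x = 0}"

lemma fdiff: "f (x - k *\<^sub>R y) = f x - k * f y"
  using lin by (simp add: linear_diff linear_scale)

lemma f0: "f 0 = 0" using lin by (simp add: linear_0)

lemma WsSf: "top_of_set Ws homotopy_equivalent_space top_of_set Sf"
proof -
  obtain p where p: "p \<in> Up" using Up(1) by blast
  obtain q where q: "q \<in> Um" using Um(1) by blast
  define a where "a = f p"
  define b where "b = f q"
  have a: "a > 0" using fUp p a_def by blast
  have b: "b < 0" using fUm q b_def by blast
  have nUp: "0 \<notin> Up" using fUp f0 by force
  have nUm: "0 \<notin> Um" using fUm f0 by force
  define W where "W = - (Up \<union> Um \<union> {0})"
  define m where "m x = (max (f x) 0 / a) *\<^sub>R p + (min (f x) 0 / b) *\<^sub>R q" for x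
  define r where "r x = x - m x" for x
  have fcont: "continuous_on A f" for A
    using lin linear_conv_bounded_linear linear_continuous_on by blast
  have seg: "x - s *\<^sub>R m x \<in> W" if x: "x \<in> W" and s: "0 \<le> s" "s \<le> 1" for x s
  proof (cases "f x \<ge> 0")
    case True
    define k where "k = s * (f x / a)"
    have k: "k \<ge> 0" using True a s k_def by simp
    have ye: "x - s *\<^sub>R m x = x - k *\<^sub>R p" using True unfolding m_def k_def by simp
    have fy: "f (x - k *\<^sub>R p) = (1 - s) * f x"
      unfolding fdiff k_def a_def[symmetric] using a by (simp add: algebra_simps)
    have "f (x - k *\<^sub>R p) \<ge> 0" using fy True s by simp
    then have n1: "x - k *\<^sub>R p \<notin> Um" using fUm by force
    have n2: "x - k *\<^sub>R p \<notin> Up"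
    proof
      assume y: "x - k *\<^sub>R p \<in> Up"
      have "x \<in> Up"
      proof (cases "k = 0")
        case True then show ?thesis using y by simp
      next
        case False
        then have "k *\<^sub>R p \<in> Up" using U_scale[OF Up(3) p] k by simp
        from U_add[OF Up(3) Up(2) y this] show ?thesis by simp
      qed
      then show False using x W_def by blast
    qed
    have n3: "x - k *\<^sub>R p \<noteq> 0"
    proof
      assume "x - k *\<^sub>R p = 0"
      then have xe: "x = k *\<^sub>R p" by simp
      show False
      proof (cases "k = 0")
        case True then show False using xe x W_def by simp
      next
        case False
        then have "x \<in> Up" using xe U_scale[OF Up(3) p] k by simp
        then show False using x W_def by blast
      qed
    qed
    show ?thesis unfolding ye W_def using n1 n2 n3 by blast
  next
    case False
    define k where "k = s * (f x / b)"
    have "f x / b \<ge> 0" using False b by (simp add: divide_nonpos_neg)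
    then have k: "k \<ge> 0" using s unfolding k_def by (metis mult_nonneg_nonneg)
    have ye: "x - s *\<^sub>R m x = x - k *\<^sub>R q" using False unfolding m_def k_def by simp
    have fy: "f (x - k *\<^sub>R q) = (1 - s) * f x"
      unfolding fdiff k_def b_def[symmetric] using b by (simp add: algebra_simps)
    have "f (x - k *\<^sub>R q) \<le> 0" using fy False s by (simp add: mult_nonneg_nonpos)
    then have n1: "x - k *\<^sub>R q \<notin> Up" using fUp by force
    have n2: "x - k *\<^sub>R q \<notin> Um"
    proof
      assume y: "x - k *\<^sub>R q \<in> Um"
      have "x \<in> Um"
      proof (cases "k = 0")
        case True then show ?thesis using y by simp
      next
        case False
        then have "k *\<^sub>R q \<in> Um" using U_scale[OF Um(3) q] k by simp
        from U_add[OF Um(3) Um(2) y this] show ?thesis by simp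
      qed
      then show False using x W_def by blast
    qed
    have n3: "x - k *\<^sub>R q \<noteq> 0"
    proof
      assume "x - k *\<^sub>R q = 0"
      then have xe: "x = k *\<^sub>R q" by simp
      show False
      proof (cases "k = 0")
        case True then show False using xe x W_def by simp
      next
        case False
        then have "x \<in> Um" using xe U_scale[OF Um(3) q] k by simp
        then show False using x W_def by blast
      qed
    qed
    show ?thesis unfolding ye W_def using n1 n2 n3 by blast
  qed
  have rW: "r x \<in> W" if "x \<in> W" for x using seg[OF that, of 1] r_def by simp
  have rnz: "r x \<noteq> 0" if "x \<in> W" for x using rW[OF that] W_def by blast
  have fr: "f (r x) = 0" for x
  proof -
    have "f (r x) = f x - (max (f x) 0 / a) * a - (min (f x) 0 / b) * b"
      unfolding r_def m_def a_def b_def using lin by (simp add: linear_diff linear_add linear_scale)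
    also have "\<dots> = 0" using a b by (simp add: max_def min_def)
    finally show ?thesis .
  qed
  have rcont: "continuous_on A r" for A
    unfolding r_def[abs_def] m_def[abs_def]
    by (intro continuous_intros fcont) (use a b in auto)
  define N where "N x = (1 / norm x) *\<^sub>R x" for x :: 'a
  have Ncont: "continuous_on W N"
    unfolding N_def[abs_def] by (intro continuous_intros) (auto simp: W_def)
  have NW: "N x \<in> Ws" if x: "x \<in> W" for x
  proof -
    have x0: "x \<noteq> 0" using x W_def by blast
    have "N x \<in> sphere 0 1" using x0 N_def by simp
    moreover have "N x \<notin> Up"
    proof
      assume "N x \<in> Up"
      then have "norm x *\<^sub>R N x \<in> Up" using U_scale[OF Up(3)] x0 by simp
      then show False using x0 x W_def N_def by simp
    qed
    moreover have "N x \<notin> Um"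
    proof
      assume "N x \<in> Um"
      then have "norm x *\<^sub>R N x \<in> Um" using U_scale[OF Um(3)] x0 by simp
      then show False using x0 x W_def N_def by simp
    qed
    ultimately show ?thesis unfolding Ws_def by blast
  qed
  have WsW: "Ws \<subseteq> W" unfolding Ws_def W_def by auto
  have SfWs: "Sf \<subseteq> Ws"
  proof
    fix x assume "x \<in> Sf"
    then have "x \<in> sphere 0 1" "f x = 0" unfolding Sf_def by auto
    then show "x \<in> Ws" unfolding Ws_def using fUp fUm by force
  qed
  define \<rho> where "\<rho> x = N (r x)" for x
  have \<rho>Sf: "\<rho> x \<in> Sf" if "x \<in> W" for x
  proof -
    have "norm (\<rho> x) = 1" using rnz[OF that] \<rho>_def N_def by simp
    moreover have "f (\<rho> x) = 0" unfolding \<rho>_def N_def using lin fr by (simp add: linear_scale)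
    ultimately show ?thesis unfolding Sf_def by simp
  qed
  have \<rho>cont: "continuous_on W \<rho>"
    unfolding \<rho>_def[abs_def]
    using continuous_on_compose[OF rcont[of W] continuous_on_subset[OF Ncont]] rW
    by (auto simp: o_def)
  have ret: "retraction_maps (top_of_set Ws) (top_of_set Sf) \<rho> id"
    unfolding retraction_maps_def
  proof (intro conjI)
    show "continuous_map (top_of_set Ws) (top_of_set Sf) \<rho>"
      using continuous_on_subset[OF \<rho>cont WsW] \<rho>Sf WsW by auto
    show "continuous_map (top_of_set Sf) (top_of_set Ws) id"
      using SfWs by (auto simp add: continuous_on_id)
    show "\<forall>x\<in>topspace (top_of_set Sf). \<rho> (id x) = x"
    proof
      fix x assume "x \<in> topspace (top_of_set Sf)"
      then have "x \<in> sphere 0 1" "f x = 0" unfolding Sf_def by auto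
      then show "\<rho> (id x) = x" unfolding \<rho>_def N_def r_def m_def by simp
    qed
  qed
  have hl: "homotopic_with_canon (\<lambda>z. True) W W r id"
  proof (rule homotopic_with_linear)
    show "continuous_on W r" by (rule rcont)
    show "continuous_on W id" by (simp add: continuous_on_id)
    fix x assume x: "x \<in> W"
    show "closed_segment (r x) (id x) \<subseteq> W"
    proof
      fix y assume "y \<in> closed_segment (r x) (id x)"
      then obtain u where u: "0 \<le> u" "u \<le> 1" "y = (1 - u) *\<^sub>R r x + u *\<^sub>R x"
        unfolding closed_segment_def by auto
      have "y = x - (1 - u) *\<^sub>R m x" using u(3) r_def by (simp add: algebra_simps)
      then show "y \<in> W" using seg[OF x, of "1 - u"] u by simp
    qed
  qed
  have NC: "continuous_map (top_of_set W) (top_of_set Ws) N"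
    using Ncont NW by auto
  have h2: "homotopic_with (\<lambda>z. True) (top_of_set W) (top_of_set Ws) (N \<circ> r) (N \<circ> id)"
    by (rule homotopic_with_compose_continuous_map_left[OF hl NC]) simp
  have h3: "homotopic_with_canon (\<lambda>z. True) Ws Ws (N \<circ> r) (N \<circ> id)"
    by (rule homotopic_with_subset_left[OF h2 WsW])
  have h4: "homotopic_with (\<lambda>x. True) (top_of_set Ws) (top_of_set Ws) (id \<circ> \<rho>) id"
  proof (rule homotopic_with_eq[OF h3])
    fix x assume "x \<in> topspace (top_of_set Ws)"
    then have "x \<in> sphere 0 1" unfolding Ws_def by auto
    then show "id x = (N \<circ> id) x" unfolding N_def by simp
  qed (auto simp: \<rho>_def)
  show ?thesis by (rule deformation_retraction_imp_homotopy_equivalent_space[OF h4 ret])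
qed

end

context fsetup begin

lemma Sf_codim: "top_of_set Sf homotopy_equivalent_space codim2_sphere TYPE('a)"
proof -
  define w where "w = (\<Sum>b\<in>Basis. f b *\<^sub>R b)"
  have fw: "f x = x \<bullet> w" for x
  proof -
    have "f x = f (\<Sum>b\<in>Basis. (x \<bullet> b) *\<^sub>R b)" by (simp add: euclidean_representation)
    also have "\<dots> = (\<Sum>b\<in>Basis. (x \<bullet> b) * f b)" using lin by (simp add: linear_sum linear_scale)
    also have "\<dots> = x \<bullet> w" unfolding w_def by (simp add: inner_sum_right mult.commute)
    finally show ?thesis .
  qed
  obtain p where p: "p \<in> Up" using Up(1) by blast
  have "w \<noteq> 0" using fUp p fw by force
  define b0 where "b0 = (SOME b. b \<in> (Basis::'a set))"
  have b0: "b0 \<in> Basis" unfolding b0_def by (rule someI_ex) (use nonempty_Basis in blast)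
  then have b00: "b0 \<noteq> 0" using nonzero_Basis by blast
  define S where "S = {x::'a. x \<bullet> w = 0}"
  define T where "T = {x::'a. x \<bullet> b0 = 0}"
  have dS: "dim S = DIM('a) - 1" unfolding S_def using dim_hyperplane[OF \<open>w \<noteq> 0\<close>]
    by (simp add: inner_commute)
  have dT: "dim T = DIM('a) - 1" unfolding T_def using dim_hyperplane[OF b00]
    by (simp add: inner_commute)
  obtain g h where gh: "linear g" "linear h" "g ` S = T" "h ` T = S"
      "\<And>x. x \<in> S \<Longrightarrow> norm (g x) = norm x" "\<And>x. x \<in> T \<Longrightarrow> norm (h x) = norm x"
      "\<And>x. x \<in> S \<Longrightarrow> h (g x) = x" "\<And>x. x \<in> T \<Longrightarrow> g (h x) = x"
  proof -
    have sS: "subspace S" unfolding S_def by (rule subspace_hyperplane2)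
    have sT: "subspace T" unfolding T_def by (rule subspace_hyperplane2)
    have dST: "dim S = dim T" using dS dT by simp
    show ?thesis by (rule isometries_subspaces[OF sS sT dST]) (rule that; assumption)
  qed
  have SfS: "Sf = sphere 0 1 \<inter> S" unfolding Sf_def S_def using fw by auto
  have cod: "codim2_sphere TYPE('a) = top_of_set (sphere 0 1 \<inter> T)"
    unfolding codim2_sphere_def T_def b0_def by (simp add: Int_def)
  have gc: "continuous_on A g" for A using gh(1) linear_conv_bounded_linear linear_continuous_on by blast
  have hc: "continuous_on A h" for A using gh(2) linear_conv_bounded_linear linear_continuous_on by blast
  have "top_of_set Sf homeomorphic_space codim2_sphere TYPE('a)"
    unfolding cod SfS homeomorphic_space_def homeomorphic_maps_def
  proof (intro exI conjI)
    show "continuous_map (top_of_set (sphere 0 1 \<inter> S)) (top_of_set (sphere 0 1 \<inter> T)) g"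
      using gc gh(3,5) by auto
    show "continuous_map (top_of_set (sphere 0 1 \<inter> T)) (top_of_set (sphere 0 1 \<inter> S)) h"
      using hc gh(4,6) by auto
    show "\<forall>x\<in>topspace (top_of_set (sphere 0 1 \<inter> S)). h (g x) = x" using gh(7) by auto
    show "\<forall>y\<in>topspace (top_of_set (sphere 0 1 \<inter> T)). g (h y) = y" using gh(8) by auto
  qed
  then show ?thesis by (rule homeomorphic_imp_homotopy_equivalent_space)
qed

lemma main: "order_complex_realization P fan_le homotopy_equivalent_space codim2_sphere TYPE('a)"
  using homotopy_eqv_trans[OF PWs homotopy_eqv_trans[OF WsSf Sf_codim]] .

end

theorem lemma6p1:
  fixes F :: "'a::euclidean_space set set"
    and Uplus Uminus :: "'a set"
    and f :: "'a \<Rightarrow> real"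
  assumes "complete_fan F"
    and "Uplus \<noteq> {}" and "convex Uplus" and "\<exists>S\<subseteq>F. Uplus = \<Union>S"
    and "Uminus \<noteq> {}" and "convex Uminus" and "\<exists>S\<subseteq>F. Uminus = \<Union>S"
    and "linear f"
    and "\<forall>x\<in>Uplus. f x > 0" and "\<forall>x\<in>Uminus. f x < 0"
  shows "(order_complex_realization
              ({C \<in> F. C \<noteq> {0}} - {C \<in> F. C \<noteq> {0} \<and> C \<subseteq> Uplus \<union> Uminus}) fan_le)
           homotopy_equivalent_space (codim2_sphere TYPE('a))"
proof -
  interpret fsetup F Uplus Uminus f
    by (intro fsetup.intro fan.intro fsetup_axioms.intro assms)
  show ?thesis using main unfolding P_def L_def .
qed

end
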